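(* Let $G$ be a finite simple graph with $n>2$ vertices. Then $\mathrm{mur}(G)=1$ if and only if $G$ or $\overline{G}$ is isomorphic to either $K_r\cup K_s$ for positive integers $r,s$ with $r+s=n$ (so $r+s>2$), or $K_r\cup\overline{K_s}$ for integers $r,s$ with $r+s=n$ and $1<r<n$.
   Context: For a finite simple undirected graph $G$ on vertices $v_1,\dots,v_n$, let $A_G$ be its $(0,1)$-adjacency matrix, $D_G=\mathrm{diag}(d_1,\dots,d_n)$ with $d_i$ the degree of $v_i$, $I$ the $n\times n$ identity matrix and $J$ the $n\times n$ all-ones matrix. A universal adjacency matrix of $G$ is any matrix $\alpha A_G+\beta I+\gamma J+\delta D_G$ with real scalars $\alpha,\beta,\gamma,\delta$ and $\alpha\neq 0$. The minimum universal rank $\mathrm{mur}(G)$ is the minimum rank over all universal adjacency matrices of $G$. $\overline{G}$ denotes the complement of $G$; $K_r\cup K_s$ and $K_r\cup\overline{K_s}$ denote vertex-disjoint unions, where $\overline{K_s}$ is the edgeless graph on $s$ vertices. *)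

theory Defs
  imports "HOL-Analysis.Analysis"
begin

definition simple_graph :: "('n::finite \<Rightarrow> 'n \<Rightarrow> bool) \<Rightarrow> bool" where
  "simple_graph E \<longleftrightarrow> (\<forall>x y. E x y \<longrightarrow> E y x) \<and> (\<forall>x. \<not> E x x)"

definition graph_compl :: "('n \<Rightarrow> 'n \<Rightarrow> bool) \<Rightarrow> 'n \<Rightarrow> 'n \<Rightarrow> bool" where
  "graph_compl E x y \<longleftrightarrow> x \<noteq> y \<and> \<not> E x y"

definition degree :: "('n::finite \<Rightarrow> 'n \<Rightarrow> bool) \<Rightarrow> 'n \<Rightarrow> nat" where
  "degree E v = card {w. E v w}"

definition adj_matrix :: "('n::finite \<Rightarrow> 'n \<Rightarrow> bool) \<Rightarrow> real^'n^'n" where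
  "adj_matrix E = (\<chi> i j. if E i j then 1 else 0)"

definition deg_matrix :: "('n::finite \<Rightarrow> 'n \<Rightarrow> bool) \<Rightarrow> real^'n^'n" where
  "deg_matrix E = (\<chi> i j. if i = j then real (degree E i) else 0)"

definition ones_matrix :: "real^'n^'n" where
  "ones_matrix = (\<chi> i j. 1)"

definition universal_adj :: "('n::finite \<Rightarrow> 'n \<Rightarrow> bool) \<Rightarrow> real \<Rightarrow> real \<Rightarrow> real \<Rightarrow> real \<Rightarrow> real^'n^'n" where
  "universal_adj E \<alpha> \<beta> \<gamma> \<delta> =
     \<alpha> *\<^sub>R adj_matrix E + \<beta> *\<^sub>R mat 1 + \<gamma> *\<^sub>R ones_matrix + \<delta> *\<^sub>R deg_matrix E"

definition mur :: "('n::finite \<Rightarrow> 'n \<Rightarrow> bool) \<Rightarrow> nat" where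
  "mur E = (LEAST k. \<exists>\<alpha> \<beta> \<gamma> \<delta>. \<alpha> \<noteq> 0 \<and> rank (universal_adj E \<alpha> \<beta> \<gamma> \<delta>) = k)"

definition iso_to :: "('n::finite \<Rightarrow> 'n \<Rightarrow> bool) \<Rightarrow> (nat \<Rightarrow> nat \<Rightarrow> bool) \<Rightarrow> nat \<Rightarrow> bool" where
  "iso_to E H m \<longleftrightarrow> (\<exists>f. bij_betw f (UNIV :: 'n set) {0..<m} \<and> (\<forall>x y. E x y \<longleftrightarrow> H (f x) (f y)))"

text \<open>K_r \<union> K_s on vertices {0..<r+s}: first r vertices form one clique, the rest the other.\<close>
definition K_union_K :: "nat \<Rightarrow> nat \<Rightarrow> nat \<Rightarrow> nat \<Rightarrow> bool" where
  "K_union_K r s i j \<longleftrightarrow> i < r + s \<and> j < r + s \<and> i \<noteq> j \<and> (i < r \<longleftrightarrow> j < r)"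

definition K_union_E :: "nat \<Rightarrow> nat \<Rightarrow> nat \<Rightarrow> nat \<Rightarrow> bool" where
  "K_union_E r s i j \<longleftrightarrow> i < r \<and> j < r \<and> i \<noteq> j"

end

theory Submission
  imports Defs
begin


lemma rank1_factor:
  fixes A :: "real^'n^'m"
  assumes "rank A = 1"
  shows "\<exists>u c. \<forall>i j. A$i$j = c i * u$j"
proof -
  obtain B where B: "B \<subseteq> rows A" "independent B" "rows A \<subseteq> span B" "card B = dim (rows A)"
    using basis_exists[of "rows A"] by blast
  then have "card B = 1" using assms row_rank_def by metis
  then obtain u where u: "B = {u}" using card_1_singletonE by blast
  have "\<forall>i. \<exists>k. A$i = k *\<^sub>R u"
  proof
    fix i
    have "row i A \<in> rows A" unfolding rows_def by blast
    then have "A$i \<in> span {u}" using B(3) u by (simp add: row_def) (metis in_mono)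
    then show "\<exists>k. A$i = k *\<^sub>R u" by (auto simp: span_singleton)
  qed
  then obtain c where "\<forall>i. A$i = c i *\<^sub>R u" by metis
  then show ?thesis by auto
qed

lemma rank_outer:
  fixes A :: "real^'n^'m"
  assumes "\<And>i j. A$i$j = c i * u$j" and "A \<noteq> 0"
  shows "rank A = 1"
proof -
  have "rows A \<subseteq> span {u}"
  proof
    fix x assume "x \<in> rows A"
    then obtain i where "x = A$i" by (auto simp: rows_def row_def)
    then have "x = c i *\<^sub>R u" using assms(1) by (auto simp: vec_eq_iff)
    then show "x \<in> span {u}" by (simp add: span_mul span_base)
  qed
  then have "dim (rows A) \<le> dim (span {u})" by (rule dim_subset)
  also have "\<dots> \<le> 1" by simp
  finally have "rank A \<le> 1" by (simp add: row_rank_def)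
  moreover have "rank A \<noteq> 0" using assms(2) rank_eq_0 by blast
  ultimately show ?thesis by simp
qed

lemma univ_entry:
  "universal_adj E a b c d $ i $ j =
     (if E i j then a else 0) + (if i = j then b + d * real (degree E i) else 0) + c"
  by (simp add: universal_adj_def adj_matrix_def deg_matrix_def ones_matrix_def mat_def)

lemma degree_compl:
  fixes E :: "'n::finite \<Rightarrow> 'n \<Rightarrow> bool"
  assumes "simple_graph E"
  shows "real (degree (graph_compl E) v) = real CARD('n) - 1 - real (degree E v)"
proof -
  have "{w. graph_compl E v w} = UNIV - insert v {w. E v w}"
    by (auto simp: graph_compl_def)
  moreover have "v \<notin> {w. E v w}" using assms by (simp add: simple_graph_def)
  ultimately have "card {w. graph_compl E v w} = CARD('n) - Suc (card {w. E v w})"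
    by (simp add: card_Diff_subset)
  moreover have "Suc (card {w. E v w}) \<le> CARD('n)"
    using \<open>v \<notin> _\<close> by (metis card_insert_disjoint card_mono finite subset_UNIV)
  ultimately show ?thesis by (simp add: degree_def of_nat_diff)
qed

lemma univ_compl:
  fixes E :: "'n::finite \<Rightarrow> 'n \<Rightarrow> bool"
  assumes "simple_graph E"
  shows "universal_adj (graph_compl E) a b c d =
    universal_adj E (-a) (b - a + d * (real CARD('n) - 1)) (a + c) (-d)"
proof -
  have irr: "\<not> E i i" for i using assms by (simp add: simple_graph_def)
  show ?thesis
    unfolding vec_eq_iff univ_entry degree_compl[OF assms]
    using irr by (auto simp: graph_compl_def algebra_simps)
qed

lemma compl_compl:
  assumes "simple_graph E" shows "graph_compl (graph_compl E) = E"
  using assms unfolding fun_eq_iff graph_compl_def simple_graph_def by blast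

lemma compl_simple: "simple_graph E \<Longrightarrow> simple_graph (graph_compl E)"
  by (auto simp: graph_compl_def simple_graph_def)

definition RS :: "('n::finite \<Rightarrow> 'n \<Rightarrow> bool) \<Rightarrow> nat set" where
  "RS E = {k. \<exists>a b c d. a \<noteq> 0 \<and> rank (universal_adj E a b c d) = k}"

definition NC :: "('n \<Rightarrow> 'n \<Rightarrow> bool) \<Rightarrow> bool" where
  "NC E \<longleftrightarrow> (\<exists>x y. E x y) \<and> (\<exists>x y. x \<noteq> y \<and> \<not> E x y)"

lemma RS_intro: "a \<noteq> 0 \<Longrightarrow> rank (universal_adj E a b c d) = k \<Longrightarrow> k \<in> RS E"
  unfolding RS_def by blast

lemma RS_compl_sub:
  assumes "simple_graph E" shows "RS (graph_compl E) \<subseteq> RS E"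
proof
  fix k assume "k \<in> RS (graph_compl E)"
  then obtain a b c d where "a \<noteq> 0" "rank (universal_adj (graph_compl E) a b c d) = k"
    unfolding RS_def by blast
  then show "k \<in> RS E" unfolding univ_compl[OF assms] by (intro RS_intro[of "-a"]) simp_all
qed

lemma RS_compl:
  assumes "simple_graph E" shows "RS (graph_compl E) = RS E"
proof
  show "RS (graph_compl E) \<subseteq> RS E" by (rule RS_compl_sub[OF assms])
  have "RS (graph_compl (graph_compl E)) \<subseteq> RS (graph_compl E)"
    by (rule RS_compl_sub[OF compl_simple[OF assms]])
  then show "RS E \<subseteq> RS (graph_compl E)" unfolding compl_compl[OF assms] .
qed

lemma NC_compl:
  assumes "simple_graph E" shows "NC (graph_compl E) = NC E"
proof -
  have s: "\<And>x y. E x y \<Longrightarrow> E y x" and i: "\<And>x. \<not> E x x"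
    using assms unfolding simple_graph_def by blast+
  show ?thesis
  proof
    assume "NC (graph_compl E)"
    then obtain x y x' y' where 1: "x \<noteq> y" "\<not> E x y" and 2: "x' \<noteq> y'" "\<not> graph_compl E x' y'"
      unfolding NC_def graph_compl_def by blast
    from 2 have "E x' y'" unfolding graph_compl_def by blast
    with 1 show "NC E" unfolding NC_def by blast
  next
    assume "NC E"
    then obtain x y x' y' where 1: "E x y" and 2: "x' \<noteq> y'" "\<not> E x' y'"
      unfolding NC_def by blast
    from 1 i have "x \<noteq> y" by metis
    with 1 2 show "NC (graph_compl E)" unfolding NC_def graph_compl_def by blast
  qed
qed

lemma rank0:
  assumes "simple_graph E" shows "0 \<in> RS E \<longleftrightarrow> \<not> NC E"
proof
  assume "0 \<in> RS E"
  then obtain a b c d where a: "a \<noteq> 0" and "rank (universal_adj E a b c d) = 0"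
    unfolding RS_def by auto
  then have M: "universal_adj E a b c d = 0" using rank_eq_0 by blast
  have "(if E i j then a else 0) + c = 0" if "i \<noteq> j" for i j
    using arg_cong[OF M, of "\<lambda>M. M $ i $ j"] that by (simp add: univ_entry)
  then have h: "\<And>i j. i \<noteq> j \<Longrightarrow> (if E i j then a else 0) + c = 0" .
  show "\<not> NC E"
  proof
    assume "NC E"
    then obtain x y x' y' where "E x y" "x' \<noteq> y'" "\<not> E x' y'" unfolding NC_def by blast
    moreover have "x \<noteq> y" using \<open>E x y\<close> assms unfolding simple_graph_def by metis
    ultimately have "a + c = 0" "c = 0" using h[of x y] h[of x' y'] by auto
    then show False using a by simp
  qed
next
  assume n: "\<not> NC E"
  have irr: "\<not> E i i" for i using assms by (simp add: simple_graph_def)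
  show "0 \<in> RS E"
  proof (cases "\<exists>x y. E x y")
    case True
    then have all: "\<And>x y. x \<noteq> y \<Longrightarrow> E x y" using n unfolding NC_def by blast
    have "universal_adj E 1 1 (-1) 0 = 0"
      unfolding vec_eq_iff univ_entry using all irr by auto
    then show ?thesis using RS_intro[of 1 E 1 "-1" 0 0] by simp
  next
    case False
    have "universal_adj E 1 0 0 0 = 0"
      unfolding vec_eq_iff univ_entry using False by auto
    then show ?thesis using RS_intro[of 1 E 0 0 0 0] by simp
  qed
qed

lemma mur_RS: "mur E = (LEAST k. k \<in> RS E)"
  unfolding mur_def RS_def by simp

lemma mur_one:
  assumes "simple_graph E" shows "mur E = 1 \<longleftrightarrow> NC E \<and> 1 \<in> RS E"
proof -
  have ne: "rank (universal_adj E 1 0 0 0) \<in> RS E" by (rule RS_intro[of 1]) simp_all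
  show ?thesis
  proof
    assume m: "mur E = 1"
    have "(LEAST k. k \<in> RS E) \<in> RS E" using ne by (rule LeastI)
    then have "1 \<in> RS E" using m by (simp add: mur_RS)
    moreover have "0 \<notin> RS E"
    proof
      assume "0 \<in> RS E"
      then have "(LEAST k. k \<in> RS E) \<le> 0" by (rule Least_le)
      with m show False by (simp add: mur_RS)
    qed
    ultimately show "NC E \<and> 1 \<in> RS E" using rank0[OF assms] by blast
  next
    assume h: "NC E \<and> 1 \<in> RS E"
    then have z: "0 \<notin> RS E" using rank0[OF assms] by blast
    show "mur E = 1" unfolding mur_RS
    proof (rule Least_equality)
      show "1 \<in> RS E" using h by blast
    next
      fix y assume "y \<in> RS E"
      then show "1 \<le> y" using z by (cases y) auto
    qed
  qed
qed

definition Str1 :: "('n::finite \<Rightarrow> 'n \<Rightarrow> bool) \<Rightarrow> bool" where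
  "Str1 G \<longleftrightarrow> (\<exists>S. S \<noteq> {} \<and> S \<noteq> UNIV \<and> (\<forall>x y. G x y \<longleftrightarrow> x \<noteq> y \<and> (x \<in> S \<longleftrightarrow> y \<in> S)))"

definition Str2 :: "('n::finite \<Rightarrow> 'n \<Rightarrow> bool) \<Rightarrow> bool" where
  "Str2 G \<longleftrightarrow> (\<exists>S. 2 \<le> card S \<and> S \<noteq> UNIV \<and> (\<forall>x y. G x y \<longleftrightarrow> x \<noteq> y \<and> x \<in> S \<and> y \<in> S))"

lemma split_bij:
  fixes S :: "'n::finite set"
  shows "\<exists>f. bij_betw f (UNIV::'n set) {0..<CARD('n)} \<and> (\<forall>x. x \<in> S \<longleftrightarrow> f x < card S)"
proof -
  let ?k = "card S" and ?m = "card (- S)"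
  obtain g where g: "bij_betw g S {0..<?k}" using ex_bij_betw_finite_nat[of S] finite by blast
  obtain h where h: "bij_betw h (- S) {0..<?m}" using ex_bij_betw_finite_nat[of "- S"] finite by blast
  have "bij_betw ((+) ?k) {0..<?m} {?k..<?k + ?m}" by (simp, simp add: add.commute)
  from bij_betw_trans[OF h this] have h': "bij_betw (\<lambda>x. ?k + h x) (- S) {?k..<?k + ?m}"
    by (simp add: comp_def)
  have km: "?k + ?m = CARD('n)" using card_Un_disjoint[of S "-S"] by (simp add: Compl_partition)
  have b: "bij_betw (\<lambda>x. if x \<in> S then g x else ?k + h x) (S \<union> - S) ({0..<?k} \<union> {?k..<?k + ?m})"
    by (rule bij_betw_disjoint_Un[OF g h']) auto
  have u: "{0..<?k} \<union> {?k..<?k + ?m} = {0..<CARD('n)}" using km by auto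
  have "bij_betw (\<lambda>x. if x \<in> S then g x else ?k + h x) UNIV {0..<CARD('n)}"
    using b u by simp
  moreover have "\<forall>x. x \<in> S \<longleftrightarrow> (if x \<in> S then g x else ?k + h x) < ?k"
    using g unfolding bij_betw_def by auto
  ultimately show ?thesis by blast
qed

lemma iso1:
  fixes G :: "'n::finite \<Rightarrow> 'n \<Rightarrow> bool"
  shows "(\<exists>r s. r > 0 \<and> s > 0 \<and> r + s = CARD('n) \<and> iso_to G (K_union_K r s) (r + s)) \<longleftrightarrow> Str1 G"
proof
  assume "\<exists>r s. r > 0 \<and> s > 0 \<and> r + s = CARD('n) \<and> iso_to G (K_union_K r s) (r + s)"
  then obtain r s f where rs: "r > 0" "s > 0" "r + s = CARD('n)"
    and f: "bij_betw f (UNIV::'n set) {0..<r+s}" and G: "\<forall>x y. G x y \<longleftrightarrow> K_union_K r s (f x) (f y)"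
    unfolding iso_to_def by blast
  let ?S = "{x. f x < r}"
  have inj: "f x = f y \<longleftrightarrow> x = y" for x y using f unfolding bij_betw_def inj_on_def by blast
  have rng: "f x < r + s" for x using f unfolding bij_betw_def by auto
  have "0 \<in> f ` UNIV" using f rs unfolding bij_betw_def by simp
  then obtain x0 where "f x0 = 0" by auto
  then have ne: "?S \<noteq> {}" using rs by (metis empty_iff mem_Collect_eq)
  have "r \<in> f ` UNIV" using f rs unfolding bij_betw_def by simp
  then obtain x1 where "f x1 = r" by auto
  then have nu: "?S \<noteq> UNIV" by auto
  have "\<forall>x y. G x y \<longleftrightarrow> x \<noteq> y \<and> (x \<in> ?S \<longleftrightarrow> y \<in> ?S)"
  proof (intro allI)
    fix x y show "G x y \<longleftrightarrow> x \<noteq> y \<and> (x \<in> ?S \<longleftrightarrow> y \<in> ?S)"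
      using G[rule_format, of x y] inj[of x y] rng[of x] rng[of y] unfolding K_union_K_def by simp
  qed
  then show "Str1 G" unfolding Str1_def using ne nu by blast
next
  assume "Str1 G"
  then obtain S where S: "S \<noteq> {}" "S \<noteq> UNIV" and G: "\<forall>x y. G x y \<longleftrightarrow> x \<noteq> y \<and> (x \<in> S \<longleftrightarrow> y \<in> S)"
    unfolding Str1_def by blast
  obtain f where f: "bij_betw f (UNIV::'n set) {0..<CARD('n)}" and fS: "\<forall>x. x \<in> S \<longleftrightarrow> f x < card S"
    using split_bij[of S] by blast
  have inj: "f x = f y \<longleftrightarrow> x = y" for x y using f unfolding bij_betw_def inj_on_def by blast
  have rng: "f x < CARD('n)" for x using f unfolding bij_betw_def by auto
  have r: "card S > 0" using S(1) by (simp add: card_gt_0_iff)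
  have "card S < CARD('n)" using psubset_card_mono[of UNIV S] S(2) by auto
  then have "CARD('n) - card S > 0" by simp
  moreover have "iso_to G (K_union_K (card S) (CARD('n) - card S)) (card S + (CARD('n) - card S))"
    unfolding iso_to_def
  proof (intro exI[of _ f] conjI allI)
    show "bij_betw f UNIV {0..<card S + (CARD('n) - card S)}" using f \<open>card S < CARD('n)\<close> by simp
    fix x y
    show "G x y \<longleftrightarrow> K_union_K (card S) (CARD('n) - card S) (f x) (f y)"
      unfolding K_union_K_def using G[rule_format, of x y] fS[rule_format, of x] fS[rule_format, of y] inj[of x y]
        rng[of x] rng[of y] \<open>card S < CARD('n)\<close> by simp
  qed
  ultimately show "\<exists>r s. r > 0 \<and> s > 0 \<and> r + s = CARD('n) \<and> iso_to G (K_union_K r s) (r + s)"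
    using r \<open>card S < CARD('n)\<close> by (intro exI[of _ "card S"] exI[of _ "CARD('n) - card S"]) auto
qed

lemma iso2:
  fixes G :: "'n::finite \<Rightarrow> 'n \<Rightarrow> bool"
  shows "(\<exists>r s. r + s = CARD('n) \<and> 1 < r \<and> r < CARD('n) \<and> iso_to G (K_union_E r s) (r + s)) \<longleftrightarrow> Str2 G"
proof
  assume "\<exists>r s. r + s = CARD('n) \<and> 1 < r \<and> r < CARD('n) \<and> iso_to G (K_union_E r s) (r + s)"
  then obtain r s f where rs: "r + s = CARD('n)" "1 < r" "r < CARD('n)"
    and f: "bij_betw f (UNIV::'n set) {0..<r+s}" and G: "\<forall>x y. G x y \<longleftrightarrow> K_union_E r s (f x) (f y)"
    unfolding iso_to_def by blast
  let ?S = "{x. f x < r}"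
  have inj: "f x = f y \<longleftrightarrow> x = y" for x y using f unfolding bij_betw_def inj_on_def by blast
  have "f ` ?S = {0..<r}"
  proof
    show "f ` ?S \<subseteq> {0..<r}" by auto
    show "{0..<r} \<subseteq> f ` ?S"
    proof
      fix i assume "i \<in> {0..<r}"
      then have "i \<in> f ` UNIV" using f rs unfolding bij_betw_def by auto
      then show "i \<in> f ` ?S" using \<open>i \<in> {0..<r}\<close> by auto
    qed
  qed
  then have "bij_betw f ?S {0..<r}" using bij_betw_subset[OF f] by blast
  then have c: "card ?S = r" using bij_betw_same_card by fastforce
  have "r \<in> f ` UNIV" using f rs unfolding bij_betw_def by simp
  then obtain x1 where "f x1 = r" by auto
  then have u: "?S \<noteq> UNIV" by auto
  have g: "\<forall>x y. G x y \<longleftrightarrow> x \<noteq> y \<and> x \<in> ?S \<and> y \<in> ?S"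
  proof (intro allI)
    fix x y show "G x y \<longleftrightarrow> x \<noteq> y \<and> x \<in> ?S \<and> y \<in> ?S"
      using G[rule_format, of x y] inj[of x y] unfolding K_union_E_def by auto
  qed
  show "Str2 G" unfolding Str2_def using rs c u g
    by (intro exI[of _ ?S]) auto
next
  assume "Str2 G"
  then obtain S where S: "2 \<le> card S" "S \<noteq> UNIV" and G: "\<forall>x y. G x y \<longleftrightarrow> x \<noteq> y \<and> x \<in> S \<and> y \<in> S"
    unfolding Str2_def by blast
  obtain f where f: "bij_betw f (UNIV::'n set) {0..<CARD('n)}" and fS: "\<forall>x. x \<in> S \<longleftrightarrow> f x < card S"
    using split_bij[of S] by blast
  have inj: "f x = f y \<longleftrightarrow> x = y" for x y using f unfolding bij_betw_def inj_on_def by blast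
  have lt: "card S < CARD('n)" using psubset_card_mono[of UNIV S] S(2) by auto
  have "iso_to G (K_union_E (card S) (CARD('n) - card S)) (card S + (CARD('n) - card S))"
    unfolding iso_to_def
  proof (intro exI[of _ f] conjI allI)
    show "bij_betw f UNIV {0..<card S + (CARD('n) - card S)}" using f lt by simp
    fix x y
    show "G x y \<longleftrightarrow> K_union_E (card S) (CARD('n) - card S) (f x) (f y)"
      unfolding K_union_E_def using G[rule_format, of x y] fS[rule_format, of x] fS[rule_format, of y] inj[of x y]
        by blast
  qed
  then show "\<exists>r s. r + s = CARD('n) \<and> 1 < r \<and> r < CARD('n) \<and> iso_to G (K_union_E r s) (r + s)"
    using S lt by (intro exI[of _ "card S"] exI[of _ "CARD('n) - card S"]) auto
qed

lemma card2I:
  fixes A :: "'a set"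
  assumes "finite A" "x \<in> A" "y \<in> A" "x \<noteq> y" shows "2 \<le> card A"
proof -
  have "card {x, y} \<le> card A" using assms by (intro card_mono) auto
  then show ?thesis using assms(4) by simp
qed

lemma card2E:
  fixes A :: "'a set"
  assumes "finite A" "2 \<le> card A" obtains x y where "x \<in> A" "y \<in> A" "x \<noteq> y"
proof -
  have "\<not> card A \<le> Suc 0" using assms(2) by simp
  then have "\<exists>x\<in>A. \<exists>y\<in>A. x \<noteq> y" using card_le_Suc0_iff_eq[OF assms(1)] by blast
  then show ?thesis using that by blast
qed

lemma str1_RS:
  fixes E :: "'n::finite \<Rightarrow> 'n \<Rightarrow> bool"
  assumes "simple_graph E" "Str1 E" shows "1 \<in> RS E"
proof -
  obtain S where S: "S \<noteq> {}" and G: "\<forall>x y. E x y \<longleftrightarrow> x \<noteq> y \<and> (x \<in> S \<longleftrightarrow> y \<in> S)"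
    using assms(2) unfolding Str1_def by blast
  define u :: "real^'n" where "u = (\<chi> i. if i \<in> S then 1 else -1)"
  have e: "universal_adj E 2 2 (-1) 0 $ i $ j = u$i * u$j" for i j
    unfolding univ_entry u_def using G[rule_format, of i j] by auto
  have "universal_adj E 2 2 (-1) 0 \<noteq> 0"
  proof
    assume "universal_adj E 2 2 (-1) 0 = 0"
    then have "universal_adj E 2 2 (-1) 0 $ i $ i = 0" for i by simp
    then have h: "(if i \<in> S then 1 else - 1) * (if i \<in> S then 1 else - 1) = (0::real)" for i
      unfolding e u_def by simp
    show False using h[of undefined] by (cases "undefined \<in> S") simp_all
  qed
  then have "rank (universal_adj E 2 2 (-1) 0) = 1" by (rule rank_outer[of _ "\<lambda>i. u$i" u, OF e])
  then show ?thesis by (intro RS_intro[of 2]) auto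
qed

lemma str2_RS:
  fixes E :: "'n::finite \<Rightarrow> 'n \<Rightarrow> bool"
  assumes "simple_graph E" "Str2 E" shows "1 \<in> RS E"
proof -
  obtain S where S: "2 \<le> card S" and G: "\<forall>x y. E x y \<longleftrightarrow> x \<noteq> y \<and> x \<in> S \<and> y \<in> S"
    using assms(2) unfolding Str2_def by blast
  have deg: "real (degree E x) = (if x \<in> S then real (card S) - 1 else 0)" for x
  proof (cases "x \<in> S")
    case True
    then have "{w. E x w} = S - {x}" using G by auto
    then show ?thesis using True S by (simp add: degree_def of_nat_diff)
  next
    case False
    then have "{w. E x w} = {}" using G by auto
    then show ?thesis using False by (simp add: degree_def)
  qed
  define d where "d = 1 / (real (card S) - 1)"
  have d: "d * (real (card S) - 1) = 1" using S unfolding d_def by simp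
  define u :: "real^'n" where "u = (\<chi> i. if i \<in> S then 1 else 0)"
  have e: "universal_adj E 1 0 0 d $ i $ j = u$i * u$j" for i j
    unfolding univ_entry u_def deg using G[rule_format, of i j] d by auto
  obtain x where "x \<in> S" using S by (metis card.empty not_numeral_le_zero ex_in_conv)
  have "universal_adj E 1 0 0 d \<noteq> 0"
  proof
    assume "universal_adj E 1 0 0 d = 0"
    then have "universal_adj E 1 0 0 d $ x $ x = 0" by simp
    then show False unfolding e u_def using \<open>x \<in> S\<close> by simp
  qed
  then have "rank (universal_adj E 1 0 0 d) = 1" by (rule rank_outer[of _ "\<lambda>i. u$i" u, OF e])
  then show ?thesis by (intro RS_intro[of 1]) auto
qed

lemma str1_NC:
  fixes E :: "'n::finite \<Rightarrow> 'n \<Rightarrow> bool"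
  assumes "Str1 E" "CARD('n) > 2" shows "NC E"
proof -
  obtain S where S: "S \<noteq> {}" "S \<noteq> UNIV" and G: "\<forall>x y. E x y \<longleftrightarrow> x \<noteq> y \<and> (x \<in> S \<longleftrightarrow> y \<in> S)"
    using assms(1) unfolding Str1_def by blast
  obtain a b where ab: "a \<in> S" "b \<notin> S" using S by blast
  then have "a \<noteq> b" "\<not> E a b" using G[rule_format, of a b] by auto
  then have ne: "\<exists>x y. x \<noteq> y \<and> \<not> E x y" by blast
  have "card S + card (- S) = CARD('n)" using card_Un_disjoint[of S "-S"] by (simp add: Compl_partition)
  then have "2 \<le> card S \<or> 2 \<le> card (- S)" using assms(2) by linarith
  then have "\<exists>x y. E x y"
  proof
    assume "2 \<le> card S"
    then obtain x y where "x \<in> S" "y \<in> S" "x \<noteq> y" using card2E[of S] finite by blast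
    then show ?thesis using G by blast
  next
    assume "2 \<le> card (- S)"
    then obtain x y where "x \<in> - S" "y \<in> - S" "x \<noteq> y" using card2E[of "- S"] finite by blast
    then show ?thesis using G by auto
  qed
  then show ?thesis using ne unfolding NC_def by blast
qed

lemma str2_NC:
  fixes E :: "'n::finite \<Rightarrow> 'n \<Rightarrow> bool"
  assumes "Str2 E" shows "NC E"
proof -
  obtain S where S: "2 \<le> card S" "S \<noteq> UNIV" and G: "\<forall>x y. E x y \<longleftrightarrow> x \<noteq> y \<and> x \<in> S \<and> y \<in> S"
    using assms(1) unfolding Str2_def by blast
  obtain x y where xy: "x \<in> S" "y \<in> S" "x \<noteq> y" using card2E[of S] S finite by blast
  obtain b where "b \<notin> S" using S by blast
  then have "b \<noteq> x" "\<not> E b x" using G xy by auto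
  then show ?thesis using G xy unfolding NC_def by blast
qed


lemma rank1_form:
  fixes E :: "'n::finite \<Rightarrow> 'n \<Rightarrow> bool"
  assumes "simple_graph E" "1 \<in> RS E"
  shows "\<exists>u q0 q1. (q0::real) \<noteq> q1 \<and> (\<forall>x y. x \<noteq> y \<longrightarrow> u x * u y = (if E x y then q1 else q0))"
proof -
  obtain a b cc d where a: "a \<noteq> 0" and r: "rank (universal_adj E a b cc d) = 1"
    using assms(2) unfolding RS_def by blast
  define M where "M = universal_adj E a b cc d"
  obtain v :: "real^'n" and c where f: "\<And>i j. M$i$j = c i * v$j"
    using rank1_factor[OF r] unfolding M_def by blast
  have "M \<noteq> 0" using r rank_eq_0 unfolding M_def by fastforce
  then obtain i0 j0 where nz: "M$i0$j0 \<noteq> 0" by (metis vec_eq_iff zero_index)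
  have sym: "M$i$j = M$j$i" for i j
  proof -
    have "E i j = E j i" using assms(1) unfolding simple_graph_def by blast
    then show ?thesis unfolding M_def univ_entry by simp
  qed
  have v0: "v$j0 \<noteq> 0" and c0: "c i0 \<noteq> 0" using nz f by auto
  define l where "l = c j0 / v$j0"
  have cl: "c i = l * v$i" for i
  proof -
    have "c i * v$j0 = c j0 * v$i" using sym[of i j0] f by simp
    then show ?thesis unfolding l_def using v0 by (simp add: field_simps)
  qed
  have l0: "l \<noteq> 0" using c0 cl by auto
  have "\<forall>x y. x \<noteq> y \<longrightarrow> v$x * v$y = (if E x y then (a + cc) / l else cc / l)"
  proof (intro allI impI)
    fix x y :: 'n assume "x \<noteq> y"
    then have "(if E x y then a else 0) + cc = l * (v$x * v$y)"
      using f[of x y] cl[of x] unfolding M_def univ_entry by simp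
    then show "v$x * v$y = (if E x y then (a + cc) / l else cc / l)"
      using l0 by (auto simp: field_simps split: if_splits)
  qed
  moreover have "(cc / l) \<noteq> (a + cc) / l" using a l0 by (simp add: field_simps)
  ultimately show ?thesis by blast
qed

lemma three_vals:
  fixes p1 p2 p3 q0 q1 :: real
  assumes "p1 = q0 \<or> p1 = q1" "p2 = q0 \<or> p2 = q1" "p3 = q0 \<or> p3 = q1"
    "p1 \<noteq> p2" "p1 \<noteq> p3" "p2 \<noteq> p3"
  shows False
  using assms by auto

lemma classify:
  fixes u :: "'n::finite \<Rightarrow> real"
  assumes P: "\<forall>x y. x \<noteq> y \<longrightarrow> u x * u y = q0 \<or> u x * u y = q1"
  shows "\<exists>S F. \<forall>x y. x \<noteq> y \<longrightarrow> u x * u y = F (x \<in> S) (y \<in> S)"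
proof (cases "\<exists>z a b. u z = 0 \<and> u a \<noteq> 0 \<and> u b \<noteq> 0 \<and> u a \<noteq> u b")
  case True
  then obtain z a b where z: "u z = 0" and ab: "u a \<noteq> 0" "u b \<noteq> 0" "u a \<noteq> u b" by blast
  have za: "z \<noteq> a" "z \<noteq> b" "a \<noteq> b" using z ab by auto
  have rest: "u c = 0" if "c \<noteq> a" "c \<noteq> b" for c
  proof (rule ccontr)
    assume uc: "u c \<noteq> 0"
    have zc: "z \<noteq> c" using z uc by auto
    show False
    proof (cases "u c = u b")
      case False
      show False
        by (rule three_vals[of "u z * u a" q0 q1 "u a * u b" "u a * u c"])
           (use P[rule_format, of z a] P[rule_format, of a b] P[rule_format, of a c] za that zc z ab uc False in auto)
    next
      case True
      show False
        by (rule three_vals[of "u z * u a" q0 q1 "u a * u b" "u b * u c"])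
           (use P[rule_format, of z a] P[rule_format, of a b] P[rule_format, of b c] za that zc z ab uc True in auto)
    qed
  qed
  show ?thesis
  proof (intro exI allI impI)
    fix x y :: 'n assume "x \<noteq> y"
    show "u x * u y = (\<lambda>p q. if p \<and> q then u a * u b else 0) (x \<in> {a, b}) (y \<in> {a, b})"
    proof (cases "x \<in> {a, b} \<and> y \<in> {a, b}")
      case True
      then show ?thesis using \<open>x \<noteq> y\<close> by auto
    next
      case False
      then have "u x = 0 \<or> u y = 0" using rest by auto
      then show ?thesis using False by auto
    qed
  qed
next
  case False
  have "\<exists>t t'. \<forall>x. u x = t \<or> u x = t'"
  proof (cases "\<exists>z. u z = 0")
    case True
    then have same: "\<And>a b. u a \<noteq> 0 \<Longrightarrow> u b \<noteq> 0 \<Longrightarrow> u a = u b" using False by blast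
    show ?thesis
    proof (cases "\<exists>a. u a \<noteq> 0")
      case True
      then obtain a where "u a \<noteq> 0" by blast
      then have "\<forall>x. u x = 0 \<or> u x = u a" using same by blast
      then show ?thesis by blast
    next
      case False
      then show ?thesis by blast
    qed
  next
    case nz: False
    show ?thesis
    proof (cases "\<exists>a b. u a \<noteq> u b")
      case True
      then obtain a b where ab: "u a \<noteq> u b" by blast
      have "u c = u a \<or> u c = u b" for c
      proof (rule ccontr)
        assume c: "\<not> (u c = u a \<or> u c = u b)"
        then have d: "a \<noteq> b" "c \<noteq> a" "c \<noteq> b" using ab by auto
        have n: "u a \<noteq> 0" "u b \<noteq> 0" "u c \<noteq> 0" using nz by auto
        show False
          by (rule three_vals[of "u a * u b" q0 q1 "u a * u c" "u b * u c"])
             (use P[rule_format, of a b] P[rule_format, of a c] P[rule_format, of b c] d n c ab in auto)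
      qed
      then show ?thesis by blast
    next
      case False
      then show ?thesis by blast
    qed
  qed
  then obtain t t' where tt: "\<forall>x. u x = t \<or> u x = t'" by blast
  let ?S = "{x. u x = t}"
  have ux: "u x = (if x \<in> ?S then t else t')" for x using tt by auto
  show ?thesis
  proof (intro exI[of _ ?S] exI[of _ "\<lambda>p q. (if p then t else t') * (if q then t else t')"] allI impI)
    fix x y :: 'n
    show "u x * u y = (\<lambda>p q. (if p then t else t') * (if q then t else t')) (x \<in> ?S) (y \<in> ?S)"
      using ux[of x] ux[of y] by simp
  qed
qed

lemma final_cases:
  fixes E :: "'n::finite \<Rightarrow> 'n \<Rightarrow> bool"
  assumes sg: "simple_graph E" and nc: "NC E"
    and fE: "\<forall>x y. x \<noteq> y \<longrightarrow> (E x y \<longleftrightarrow> f (x \<in> S) (y \<in> S))"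
  shows "Str1 E \<or> Str2 E \<or> Str1 (graph_compl E) \<or> Str2 (graph_compl E)"
proof -
  have irr: "\<not> E x x" for x using sg unfolding simple_graph_def by blast
  have symE: "E x y = E y x" for x y using sg unfolding simple_graph_def by blast
  have Ef: "E x y \<longleftrightarrow> x \<noteq> y \<and> f (x \<in> S) (y \<in> S)" for x y
    using fE irr by (cases "x = y") auto
  have cEf: "graph_compl E x y \<longleftrightarrow> x \<noteq> y \<and> \<not> f (x \<in> S) (y \<in> S)" for x y
    unfolding graph_compl_def using Ef by auto
  obtain e1 e2 where e: "E e1 e2" using nc unfolding NC_def by blast
  then have e12: "e1 \<noteq> e2" "f (e1 \<in> S) (e2 \<in> S)" using Ef by auto
  obtain n1 n2 where n: "n1 \<noteq> n2" "\<not> E n1 n2" using nc unfolding NC_def by blast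
  then have n12: "\<not> f (n1 \<in> S) (n2 \<in> S)" using Ef by auto
  have "S \<noteq> {}"
  proof
    assume "S = {}" then show False using e12 n12 by simp
  qed
  then obtain a where a: "a \<in> S" by blast
  have "S \<noteq> UNIV"
  proof
    assume "S = UNIV" then show False using e12 n12 by simp
  qed
  then obtain b where b: "b \<notin> S" by blast
  have ab: "a \<noteq> b" using a b by blast
  have fsym: "f False True = f True False"
    using symE[of a b] Ef[of a b] Ef[of b a] a b ab by simp
  have nU: "- S \<noteq> UNIV" using a by blast
  have nE: "- S \<noteq> {}" using b by blast
  show ?thesis
  proof (cases "f True True"; cases "f False False"; cases "f True False")
    assume "f True True" "f False False" "f True False"
    then have False using n12 fsym by (cases "n1 \<in> S"; cases "n2 \<in> S") auto
    then show ?thesis ..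
  next
    assume h: "f True True" "f False False" "\<not> f True False"
    have "Str1 E" unfolding Str1_def
    proof (intro exI[of _ S] conjI allI)
      show "S \<noteq> {}" "S \<noteq> UNIV" by fact+
      fix x y show "E x y = (x \<noteq> y \<and> (x \<in> S \<longleftrightarrow> y \<in> S))"
        using Ef[of x y] h fsym by (cases "x \<in> S"; cases "y \<in> S") auto
    qed
    then show ?thesis by blast
  next
    assume h: "f True True" "\<not> f False False" "f True False"
    have "Str2 (graph_compl E)" unfolding Str2_def
    proof (intro exI[of _ "- S"] conjI allI)
      have "n1 \<in> - S" "n2 \<in> - S" using n12 h fsym by (cases "n1 \<in> S"; cases "n2 \<in> S"; auto)+
      then show "2 \<le> card (- S)" using card2I[of "- S" n1 n2] n by simp
      show "- S \<noteq> UNIV" by (rule nU)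
      fix x y show "graph_compl E x y = (x \<noteq> y \<and> x \<in> - S \<and> y \<in> - S)"
        using cEf[of x y] h fsym by (cases "x \<in> S"; cases "y \<in> S") auto
    qed
    then show ?thesis by blast
  next
    assume h: "f True True" "\<not> f False False" "\<not> f True False"
    have "Str2 E" unfolding Str2_def
    proof (intro exI[of _ S] conjI allI)
      have "e1 \<in> S" "e2 \<in> S" using e12 h fsym by (cases "e1 \<in> S"; cases "e2 \<in> S"; auto)+
      then show "2 \<le> card S" using card2I[of S e1 e2] e12 by simp
      show "S \<noteq> UNIV" by fact
      fix x y show "E x y = (x \<noteq> y \<and> x \<in> S \<and> y \<in> S)"
        using Ef[of x y] h fsym by (cases "x \<in> S"; cases "y \<in> S") auto
    qed
    then show ?thesis by blast
  next
    assume h: "\<not> f True True" "f False False" "f True False"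
    have "Str2 (graph_compl E)" unfolding Str2_def
    proof (intro exI[of _ S] conjI allI)
      have "n1 \<in> S" "n2 \<in> S" using n12 h fsym by (cases "n1 \<in> S"; cases "n2 \<in> S"; auto)+
      then show "2 \<le> card S" using card2I[of S n1 n2] n by simp
      show "S \<noteq> UNIV" by fact
      fix x y show "graph_compl E x y = (x \<noteq> y \<and> x \<in> S \<and> y \<in> S)"
        using cEf[of x y] h fsym by (cases "x \<in> S"; cases "y \<in> S") auto
    qed
    then show ?thesis by blast
  next
    assume h: "\<not> f True True" "f False False" "\<not> f True False"
    have "Str2 E" unfolding Str2_def
    proof (intro exI[of _ "- S"] conjI allI)
      have "e1 \<in> - S" "e2 \<in> - S" using e12 h fsym by (cases "e1 \<in> S"; cases "e2 \<in> S"; auto)+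
      then show "2 \<le> card (- S)" using card2I[of "- S" e1 e2] e12 by simp
      show "- S \<noteq> UNIV" by (rule nU)
      fix x y show "E x y = (x \<noteq> y \<and> x \<in> - S \<and> y \<in> - S)"
        using Ef[of x y] h fsym by (cases "x \<in> S"; cases "y \<in> S") auto
    qed
    then show ?thesis by blast
  next
    assume h: "\<not> f True True" "\<not> f False False" "f True False"
    have "Str1 (graph_compl E)" unfolding Str1_def
    proof (intro exI[of _ S] conjI allI)
      show "S \<noteq> {}" "S \<noteq> UNIV" by fact+
      fix x y show "graph_compl E x y = (x \<noteq> y \<and> (x \<in> S \<longleftrightarrow> y \<in> S))"
        using cEf[of x y] h fsym by (cases "x \<in> S"; cases "y \<in> S") auto
    qed
    then show ?thesis by blast
  next
    assume "\<not> f True True" "\<not> f False False" "\<not> f True False"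
    then have False using e12 fsym by (cases "e1 \<in> S"; cases "e2 \<in> S") auto
    then show ?thesis ..
  qed
qed

lemma converse_main:
  fixes E :: "'n::finite \<Rightarrow> 'n \<Rightarrow> bool"
  assumes sg: "simple_graph E" and nc: "NC E" and r: "1 \<in> RS E"
  shows "Str1 E \<or> Str2 E \<or> Str1 (graph_compl E) \<or> Str2 (graph_compl E)"
proof -
  obtain u q0 q1 where q: "(q0::real) \<noteq> q1"
    and uq: "\<forall>x y. x \<noteq> y \<longrightarrow> u x * u y = (if E x y then q1 else q0)"
    using rank1_form[OF sg r] by blast
  have P: "\<forall>x y. x \<noteq> y \<longrightarrow> u x * u y = q0 \<or> u x * u y = q1" using uq by auto
  obtain S F where SF: "\<forall>x y. x \<noteq> y \<longrightarrow> u x * u y = F (x \<in> S) (y \<in> S)"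
    using classify[OF P] by blast
  have "\<forall>x y. x \<noteq> y \<longrightarrow> (E x y \<longleftrightarrow> (\<lambda>p q. F p q = q1) (x \<in> S) (y \<in> S))"
  proof (intro allI impI)
    fix x y :: 'n assume "x \<noteq> y"
    then have "u x * u y = (if E x y then q1 else q0)" "u x * u y = F (x \<in> S) (y \<in> S)"
      using uq SF by auto
    then show "E x y \<longleftrightarrow> (\<lambda>p q. F p q = q1) (x \<in> S) (y \<in> S)" using q by auto
  qed
  then show ?thesis by (rule final_cases[OF sg nc])
qed

theorem theorem26:
  fixes E :: "'n::finite \<Rightarrow> 'n \<Rightarrow> bool"
  assumes "simple_graph E" and "CARD('n) > 2"
  shows "mur E = 1 \<longleftrightarrow>
    (\<exists>G \<in> {E, graph_compl E}.
       (\<exists>r s. r > 0 \<and> s > 0 \<and> r + s = CARD('n) \<and> iso_to G (K_union_K r s) (r + s)) \<or>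
       (\<exists>r s. r + s = CARD('n) \<and> 1 < r \<and> r < CARD('n) \<and> iso_to G (K_union_E r s) (r + s)))"
proof -
  have sc: "simple_graph (graph_compl E)" by (rule compl_simple[OF assms(1)])
  have rhs: "(\<exists>G \<in> {E, graph_compl E}.
       (\<exists>r s. r > 0 \<and> s > 0 \<and> r + s = CARD('n) \<and> iso_to G (K_union_K r s) (r + s)) \<or>
       (\<exists>r s. r + s = CARD('n) \<and> 1 < r \<and> r < CARD('n) \<and> iso_to G (K_union_E r s) (r + s)))
     \<longleftrightarrow> Str1 E \<or> Str2 E \<or> Str1 (graph_compl E) \<or> Str2 (graph_compl E)"
    unfolding iso1 iso2 by blast
  have "NC E \<and> 1 \<in> RS E \<longleftrightarrow> Str1 E \<or> Str2 E \<or> Str1 (graph_compl E) \<or> Str2 (graph_compl E)"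
  proof
    assume "NC E \<and> 1 \<in> RS E"
    then show "Str1 E \<or> Str2 E \<or> Str1 (graph_compl E) \<or> Str2 (graph_compl E)"
      using converse_main[OF assms(1)] by blast
  next
    assume "Str1 E \<or> Str2 E \<or> Str1 (graph_compl E) \<or> Str2 (graph_compl E)"
    then show "NC E \<and> 1 \<in> RS E"
    proof (elim disjE)
      assume "Str1 E" then show ?thesis using str1_NC[OF _ assms(2)] str1_RS[OF assms(1)] by blast
    next
      assume "Str2 E" then show ?thesis using str2_NC str2_RS[OF assms(1)] by blast
    next
      assume "Str1 (graph_compl E)"
      then have "NC (graph_compl E)" "1 \<in> RS (graph_compl E)"
        using str1_NC[OF _ assms(2)] str1_RS[OF sc] by blast+
      then show ?thesis using NC_compl[OF assms(1)] RS_compl[OF assms(1)] by simp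
    next
      assume "Str2 (graph_compl E)"
      then have "NC (graph_compl E)" "1 \<in> RS (graph_compl E)"
        using str2_NC str2_RS[OF sc] by blast+
      then show ?thesis using NC_compl[OF assms(1)] RS_compl[OF assms(1)] by simp
    qed
  qed
  then show ?thesis using rhs mur_one[OF assms(1)] by simp
qed


end
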